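(* Let $\mathcal{A}=(A,\{\to_{1,\alpha}\}_{\alpha\in I})$ and $\mathcal{B}=(A,\{\to_{2,\beta}\}_{\beta\in I})$ be $I$-indexed ARSs on the same set $A$, and let $>$ be a well-founded order on $I$ having a least element $\bot$. Suppose $\to_{1,\bot}$ and $\to_{2,\bot}$ commute. If every local peak $b\;{}_{1,\alpha}\!\!\leftarrow a\to_{2,\beta} c$ with $(\alpha,\beta)\in I^2\setminus\{(\bot,\bot)\}$ is decreasing, then $\mathcal{A}$ and $\mathcal{B}$ commute.
   Context: An $I$-indexed abstract rewrite system (ARS) is a pair $(A,\{\to_\alpha\}_{\alpha\in I})$ of a set and a family of binary relations on it; $\to_\mathcal{A}$ is the union of all its relations. Relations $\to_1,\to_2$ commute if ${}_1\!\!\leftarrow^*\cdot\to_2^*\;\subseteq\;\to_2^*\cdot{}_1\!\!\leftarrow^*$; ARSs $\mathcal{A},\mathcal{B}$ commute if $\to_\mathcal{A}$ and $\to_\mathcal{B}$ commute. For $\alpha\in I$, $\curlyvee\alpha=\{\gamma\in I\mid\alpha>\gamma\}$ and $\curlyvee\alpha\beta=\curlyvee\alpha\cup\curlyvee\beta$. For $K\subseteq I$, $\leftrightarrow_K$ is the union of ${}_{1,\gamma}\!\!\leftarrow$ and $\to_{2,\gamma}$ over $\gamma\in K$. A local peak $b\;{}_{1,\alpha}\!\!\leftarrow a\to_{2,\beta} c$ is decreasing if $b\leftrightarrow^*_{\curlyvee\alpha}\cdot\to^=_{2,\beta}\cdot\leftrightarrow^*_{\curlyvee\alpha\beta}\cdot{}_{1,\alpha}\!\!\leftarrow^=\cdot\leftrightarrow^*_{\curlyvee\beta}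 c$, where $\to^=$ denotes the reflexive closure. *)

theory Defs
  imports Main
begin

text \<open>An I-indexed ARS on a carrier type 'a is a family R :: 'i => ('a * 'a) set.
  The order on indices is a relation gt, where (alpha, gamma) : gt means alpha > gamma.\<close>

definition commute :: "('a \<times> 'a) set \<Rightarrow> ('a \<times> 'a) set \<Rightarrow> bool" where
  "commute r1 r2 \<longleftrightarrow> (r1\<inverse>)\<^sup>* O r2\<^sup>* \<subseteq> r2\<^sup>* O (r1\<inverse>)\<^sup>*"

definition union_ars :: "('i \<Rightarrow> ('a \<times> 'a) set) \<Rightarrow> ('a \<times> 'a) set" where
  "union_ars R = (\<Union>\<alpha>. R \<alpha>)"

definition ars_commute :: "('i \<Rightarrow> ('a \<times> 'a) set) \<Rightarrow> ('i \<Rightarrow> ('a \<times> 'a) set) \<Rightarrow> bool" where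
  "ars_commute R1 R2 \<longleftrightarrow> commute (union_ars R1) (union_ars R2)"

definition below :: "('i \<times> 'i) set \<Rightarrow> 'i \<Rightarrow> 'i set" where
  "below gt \<alpha> = {\<gamma>. (\<alpha>, \<gamma>) \<in> gt}"

definition below2 :: "('i \<times> 'i) set \<Rightarrow> 'i \<Rightarrow> 'i \<Rightarrow> 'i set" where
  "below2 gt \<alpha> \<beta> = below gt \<alpha> \<union> below gt \<beta>"

definition conv_K :: "('i \<Rightarrow> ('a \<times> 'a) set) \<Rightarrow> ('i \<Rightarrow> ('a \<times> 'a) set) \<Rightarrow> 'i set \<Rightarrow> ('a \<times> 'a) set" where
  "conv_K R1 R2 K = (\<Union>\<gamma>\<in>K. (R1 \<gamma>)\<inverse> \<union> R2 \<gamma>)"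

definition decreasing_peak ::
  "('i \<times> 'i) set \<Rightarrow> ('i \<Rightarrow> ('a \<times> 'a) set) \<Rightarrow> ('i \<Rightarrow> ('a \<times> 'a) set) \<Rightarrow> 'i \<Rightarrow> 'i \<Rightarrow> 'a \<Rightarrow> 'a \<Rightarrow> bool" where
  "decreasing_peak gt R1 R2 \<alpha> \<beta> b c \<longleftrightarrow>
     (b, c) \<in> (conv_K R1 R2 (below gt \<alpha>))\<^sup>* O (R2 \<beta>)\<^sup>= O
               (conv_K R1 R2 (below2 gt \<alpha> \<beta>))\<^sup>* O ((R1 \<alpha>)\<inverse>)\<^sup>= O
               (conv_K R1 R2 (below gt \<beta>))\<^sup>*"

end

theory Submission imports Defs "HOL-Library.Multiset" begin

locale lo =
  fixes gt :: "('i \<times> 'i) set"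
  assumes irr: "irrefl gt" and tr: "trans gt" and wfgt: "wf (gt\<inverse>)"
begin

abbreviation r where "r \<equiv> gt\<inverse>"

definition F :: "'i set \<Rightarrow> 'i multiset \<Rightarrow> 'i multiset" where
  "F A M = filter_mset (\<lambda>x. \<forall>a\<in>A. (a,x) \<notin> gt) M"

definition bel :: "'i set \<Rightarrow> 'i \<Rightarrow> bool" where
  "bel A c \<longleftrightarrow> (\<exists>a\<in>A. (a,c) \<in> gt)"

fun lmm :: "'i list \<Rightarrow> 'i multiset" where
  "lmm [] = {#}"
| "lmm (a # l) = add_mset a (F {a} (lmm l))"

definition le where "le X Y \<longleftrightarrow> (X, Y) \<in> (mult r)\<^sup>="
definition lt where "lt X Y \<longleftrightarrow> (X, Y) \<in> mult r"

definition leA :: "'i set \<Rightarrow> 'i multiset \<Rightarrow> 'i multiset \<Rightarrow> bool" where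
  "leA A X Y \<longleftrightarrow> (\<exists>C. (\<forall>c\<in>#C. bel A c) \<and> le X (C + F A Y))"

lemma trans_r: "trans r" using tr unfolding trans_def by blast

lemma lt_trans: "lt X Y \<Longrightarrow> lt Y Z \<Longrightarrow> lt X Z"
  unfolding lt_def using trans_mult[OF trans_r] by (meson transD)
lemma le_trans: "le X Y \<Longrightarrow> le Y Z \<Longrightarrow> le X Z"
  unfolding le_def using lt_trans[unfolded lt_def] by auto
lemma le_lt_trans: "le X Y \<Longrightarrow> lt Y Z \<Longrightarrow> lt X Z"
  unfolding le_def using lt_trans by (auto simp: lt_def)
lemma lt_le_trans: "lt X Y \<Longrightarrow> le Y Z \<Longrightarrow> lt X Z"
  unfolding le_def using lt_trans by (auto simp: lt_def)
lemmas [trans] = le_trans le_lt_trans lt_le_trans lt_trans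

lemma lt_le: "lt X Y \<Longrightarrow> le X Y" by (simp add: lt_def le_def)
lemma le_refl[simp]: "le X X" by (simp add: le_def)

lemma le_step: "\<forall>k\<in>#K. \<exists>j\<in>#J. (j,k) \<in> gt \<Longrightarrow> le (I + K) (I + J)"
proof (cases "J = {#}")
  case True
  assume "\<forall>k\<in>#K. \<exists>j\<in>#J. (j,k) \<in> gt"
  with True have "K = {#}" by (cases K) auto
  with True show ?thesis by simp
next
  case False
  assume "\<forall>k\<in>#K. \<exists>j\<in>#J. (j,k) \<in> gt"
  then show ?thesis using one_step_implies_mult[OF False, of K r I] unfolding le_def by auto
qed

lemma lt_step: "J \<noteq> {#} \<Longrightarrow> \<forall>k\<in>#K. \<exists>j\<in>#J. (j,k) \<in> gt \<Longrightarrow> lt (I + K) (I + J)"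
  using one_step_implies_mult[of J K r I] unfolding lt_def by auto

lemma lt_one_step: "lt X Y \<Longrightarrow> \<exists>I J K. Y = I + J \<and> X = I + K \<and> J \<noteq> {#} \<and> (\<forall>k\<in>#K. \<exists>j\<in>#J. (j,k) \<in> gt)"
  unfolding lt_def using mult_implies_one_step[OF trans_r] by fastforce

lemma lt_add: "lt X Y \<Longrightarrow> lt (X + Z) (Y + Z)"
proof -
  assume "lt X Y"
  then obtain I J K where "Y = I + J" "X = I + K" "J \<noteq> {#}" "\<forall>k\<in>#K. \<exists>j\<in>#J. (j,k) \<in> gt"
    using lt_one_step by blast
  then show ?thesis using lt_step[of J K "I + Z"] by (simp add: ac_simps)
qed

lemma le_add: "le X Y \<Longrightarrow> le (X + Z) (Y + Z)"
  using lt_add unfolding le_def lt_def by auto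

lemma le_add2: "le X Y \<Longrightarrow> le (Z + X) (Z + Y)"
  using le_add by (simp add: ac_simps)

lemma le_add_both: "le X Y \<Longrightarrow> le Z W \<Longrightarrow> le (X + Z) (Y + W)"
  by (meson le_add le_add2 le_trans)

lemma le_subseteq: "X \<subseteq># Y \<Longrightarrow> le X Y"
  unfolding le_def using subset_implies_mult[of X Y r] by (auto simp: subset_mset.le_less)

lemma F_le: "le (F A X) X"
  by (rule le_subseteq) (simp add: F_def)

lemma F_plus[simp]: "F A (X + Y) = F A X + F A Y" by (simp add: F_def)
lemma F_F: "F A (F B X) = F (A \<union> B) X" by (auto simp: F_def filter_filter_mset intro!: filter_mset_cong)

lemma bel_trans: "bel A c \<Longrightarrow> (c, d) \<in> gt \<Longrightarrow> bel A d"
  unfolding bel_def using tr by (meson transD)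

lemma F_split: "X = F A X + filter_mset (bel A) X"
  unfolding F_def bel_def by (rule multiset_eqI) auto

lemma lt_F: "lt X Y \<Longrightarrow> le (F A X) (F A Y)"
proof -
  assume "lt X Y"
  then obtain I J K where IJK: "Y = I + J" "X = I + K" "\<forall>k\<in>#K. \<exists>j\<in>#J. (j,k) \<in> gt"
    using lt_one_step by blast
  have "\<forall>k\<in>#F A K. \<exists>j\<in>#F A J. (j,k) \<in> gt"
  proof
    fix k assume k: "k \<in># F A K"
    then obtain j where j: "j \<in># J" "(j,k) \<in> gt" using IJK by (auto simp: F_def)
    have "j \<in># F A J"
    proof (rule ccontr)
      assume "j \<notin># F A J"
      then obtain a where "a \<in> A" "(a,j) \<in> gt" using j by (auto simp: F_def)
      then have "(a,k) \<in> gt" using j tr by (meson transD)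
      then show False using k \<open>a \<in> A\<close> by (auto simp: F_def)
    qed
    then show "\<exists>j\<in>#F A J. (j,k) \<in> gt" using j by blast
  qed
  then show ?thesis using le_step IJK by simp
qed

lemma le_F: "le X Y \<Longrightarrow> le (F A X) (F A Y)"
  using lt_F unfolding le_def lt_def by auto

lemma leA_le: "le X X' \<Longrightarrow> leA A X' Y \<Longrightarrow> leA A X Y"
  unfolding leA_def using le_trans by blast

lemma leA_refl: "leA A Y Y"
proof -
  have "Y = filter_mset (bel A) Y + F A Y" using F_split[of Y A] by (simp add: ac_simps)
  then show ?thesis unfolding leA_def by (metis le_refl mem_Collect_eq set_mset_filter)
qed

lemma le_leA: "le X Y \<Longrightarrow> leA A X Y"
  using leA_le leA_refl by blast

lemma F_bel_empty: "\<forall>c\<in>#C. bel A c \<Longrightarrow> F A C = {#}"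
  unfolding F_def bel_def by (auto simp: filter_mset_eq_conv)

lemma F_idem: "F A (F A X) = F A X" using F_F by simp

lemma leA_trans: "leA A X Y \<Longrightarrow> leA A Y Z \<Longrightarrow> leA A X Z"
proof -
  assume "leA A X Y" "leA A Y Z"
  then obtain C1 C2 where C1: "\<forall>c\<in>#C1. bel A c" "le X (C1 + F A Y)"
    and C2: "\<forall>c\<in>#C2. bel A c" "le Y (C2 + F A Z)" unfolding leA_def by blast
  have "le (F A Y) (F A (C2 + F A Z))" using le_F C2 by blast
  also have "F A (C2 + F A Z) = F A Z" using F_bel_empty[OF C2(1)] F_idem by simp
  finally have "le (C1 + F A Y) (C1 + F A Z)" using le_add2 by blast
  then show ?thesis using C1 le_trans unfolding leA_def by blast
qed

lemma F_union_eq: "\<forall>a\<in>A. a \<in> B \<or> bel B a \<Longrightarrow> F (B \<union> A) Y = F B Y"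
  unfolding F_def bel_def using tr by (auto intro!: filter_mset_cong dest: transD)

lemma leA_mono: "\<forall>a\<in>A. a \<in> B \<or> bel B a \<Longrightarrow> leA A X Y \<Longrightarrow> leA B X Y"
proof -
  assume AB: "\<forall>a\<in>A. a \<in> B \<or> bel B a" and "leA A X Y"
  then obtain C where C: "\<forall>c\<in>#C. bel A c" "le X (C + F A Y)" unfolding leA_def by blast
  have e: "F A Y = F B Y + filter_mset (bel B) (F A Y)"
    using F_split[of "F A Y" B] F_F F_union_eq[OF AB] by simp
  have "\<forall>c\<in>#C + filter_mset (bel B) (F A Y). bel B c"
  proof
    fix c assume "c \<in># C + filter_mset (bel B) (F A Y)"
    then consider "c \<in># C" | "c \<in># filter_mset (bel B) (F A Y)" by auto
    then show "bel B c"
    proof cases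
      case 1
      then obtain a where "a \<in> A" "(a,c) \<in> gt" using C unfolding bel_def by blast
      then show "bel B c" using AB tr unfolding bel_def by (meson transD)
    qed auto
  qed
  moreover have "C + F A Y = (C + filter_mset (bel B) (F A Y)) + F B Y"
    using e by (simp add: ac_simps)
  ultimately show ?thesis using C unfolding leA_def by metis
qed

lemma leA_cons: "leA A X Z \<Longrightarrow> bel A d \<Longrightarrow> leA A (add_mset d (F {d} X)) Z"
proof -
  assume "leA A X Z" "bel A d"
  then obtain C where C: "\<forall>c\<in>#C. bel A c" "le X (C + F A Z)" unfolding leA_def by blast
  have "le (add_mset d (F {d} X)) (add_mset d X)"
    using le_add2[OF F_le, of "{#d#}"] by simp
  also have "le (add_mset d X) (add_mset d C + F A Z)"
    using le_add2[OF C(2), of "{#d#}"] by simp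
  finally show ?thesis using C \<open>bel A d\<close> unfolding leA_def
    by (metis insert_iff set_mset_add_mset_insert le_trans)
qed

lemma leA_lt: "leA {a} X (lmm w) \<Longrightarrow> lt X (lmm (a # w))"
proof -
  assume "leA {a} X (lmm w)"
  then obtain C where C: "\<forall>c\<in>#C. bel {a} c" "le X (C + F {a} (lmm w))" unfolding leA_def by blast
  have "lt (F {a} (lmm w) + C) (F {a} (lmm w) + {#a#})"
    using C(1) by (intro lt_step) (auto simp: bel_def)
  then show ?thesis using C(2) le_lt_trans by (simp add: ac_simps)
qed

lemma le_cons_F: "le X (add_mset b (F {b} X))"
proof -
  have "le (F {b} X + filter_mset (bel {b}) X) (F {b} X + {#b#})"
    by (intro le_step) (auto simp: bel_def)
  then show ?thesis using F_split[of X "{b}"] by simp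
qed

lemma leA_A7: "leA {a, b} X (lmm w) \<Longrightarrow> leA {a} (add_mset b (F {b} X)) (lmm (b # w))"
proof -
  assume "leA {a, b} X (lmm w)"
  then obtain C where C: "\<forall>c\<in>#C. bel {a,b} c" "le X (C + F {a,b} (lmm w))" unfolding leA_def by blast
  have "le (F {b} X) (F {b} (C + F {a,b} (lmm w)))" using le_F C by blast
  also have "F {b} (C + F {a,b} (lmm w)) = F {b} C + F {a,b} (lmm w)"
    using F_F[of "{b}" "{a,b}"] by (simp add: insert_commute)
  finally have 1: "le (add_mset b (F {b} X)) (add_mset b (F {b} C) + F {a,b} (lmm w))"
    using le_add2[of _ _ "{#b#}"] by simp
  have FbC: "\<forall>c\<in>#F {b} C. bel {a} c" using C(1) by (auto simp: F_def bel_def)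
  have l: "lmm (b # w) = {#b#} + F {b} (lmm w)" by simp
  have Flmm: "F {a} (lmm (b # w)) = F {a} {#b#} + F {a,b} (lmm w)"
    unfolding l F_plus F_F by (simp add: insert_commute)
  show ?thesis
  proof (cases "(a,b) \<in> gt")
    case True
    then have "F {a} {#b#} = {#}" by (simp add: F_def)
    then show ?thesis using 1 FbC True Flmm unfolding leA_def
      by (intro exI[of _ "add_mset b (F {b} C)"]) (auto simp: bel_def)
  next
    case False
    then have "F {a} {#b#} = {#b#}" by (simp add: F_def)
    then show ?thesis using 1 FbC Flmm unfolding leA_def
      by (intro exI[of _ "F {b} C"]) (auto simp: ac_simps)
  qed
qed

lemma leA_A6: "leA {a, b} X (lmm w) \<Longrightarrow> leA {a} X (lmm (b # w))"
  using leA_A7 le_cons_F leA_le by blast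

lemma leA_A5: "leA {a, b} X (lmm w) \<Longrightarrow> lt X (lmm (a # b # w))"
  using leA_A6 leA_lt by blast

end

locale dd = lo gt for gt :: "('i \<times> 'i) set" +
  fixes R1 R2 :: "'i \<Rightarrow> ('a \<times> 'a) set"
  assumes peaks: "\<And>\<alpha> \<beta> a b c. (a, b) \<in> R1 \<alpha> \<Longrightarrow> (a, c) \<in> R2 \<beta> \<Longrightarrow> decreasing_peak gt R1 R2 \<alpha> \<beta> b c"
begin

inductive rpath :: "'a \<Rightarrow> 'i list \<Rightarrow> 'a \<Rightarrow> bool" where
  rnil: "rpath x [] x"
| rcons: "(x, y) \<in> R2 b \<Longrightarrow> rpath y w z \<Longrightarrow> rpath x (b # w) z"

definition U1 where "U1 = (union_ars R1)\<inverse>"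

lemma U1I: "(y, x) \<in> R1 a \<Longrightarrow> (x, y) \<in> U1"
  unfolding U1_def union_ars_def by blast

definition PKs :: "'i \<Rightarrow> 'i list \<Rightarrow> bool" where
  "PKs a w \<longleftrightarrow> (\<forall>x y z. (y, x) \<in> R1 a \<longrightarrow> rpath y w z \<longrightarrow>
     (\<exists>w' z'. rpath x w' z' \<and> (z', z) \<in> U1\<^sup>* \<and> leA {a} (lmm w') (lmm w)))"

lemma seg:
  assumes "(x, y) \<in> (conv_K R1 R2 K)\<^sup>*"
    and "\<forall>g\<in>K. bel A g"
    and orc: "\<And>d w'. d \<in> K \<Longrightarrow> leA A (lmm w') Z \<Longrightarrow> PKs d w'"
  shows "rpath y w z \<Longrightarrow> (z, t) \<in> U1\<^sup>* \<Longrightarrow> leA A (lmm w) Z \<Longrightarrow>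
    \<exists>w' z'. rpath x w' z' \<and> (z', t) \<in> U1\<^sup>* \<and> leA A (lmm w') Z"
  using assms(1)
proof (induction arbitrary: w z rule: converse_rtrancl_induct)
  case base
  then show ?case by blast
next
  case (step x x')
  obtain w1 z1 where w1: "rpath x' w1 z1" "(z1, t) \<in> U1\<^sup>*" "leA A (lmm w1) Z"
    using step.IH[OF step.prems] by blast
  from step.hyps(1) obtain g where g: "g \<in> K" "(x, x') \<in> (R1 g)\<inverse> \<or> (x, x') \<in> R2 g"
    unfolding conv_K_def by blast
  show ?case
  proof (cases "(x, x') \<in> R2 g")
    case True
    have "rpath x (g # w1) z1" using True w1 by (blast intro: rcons)
    moreover have "leA A (lmm (g # w1)) Z" using leA_cons[OF w1(3)] assms(2) g by simp
    ultimately show ?thesis using w1 by blast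
  next
    case False
    then have "(x', x) \<in> R1 g" using g by blast
    with orc[OF g(1) w1(3)] w1(1) obtain w2 z2 where
      w2: "rpath x w2 z2" "(z2, z1) \<in> U1\<^sup>*" "leA {g} (lmm w2) (lmm w1)"
      unfolding PKs_def by blast
    have "leA A (lmm w2) (lmm w1)" using leA_mono[OF _ w2(3)] assms(2) g by auto
    then have "leA A (lmm w2) Z" using leA_trans w1(3) by blast
    then show ?thesis using w2 w1 by (meson rtrancl_trans)
  qed
qed

definition ord where "ord = inv_image (mult r <*lex*> mult r) (\<lambda>(a, w). (lmm (a # w), lmm w))"

lemma wf_ord: "wf ord"
  unfolding ord_def by (intro wf_inv_image wf_lex_prod wf_mult wfgt)

lemma lt_ord: "lt (lmm (d # w')) (lmm (a # w)) \<Longrightarrow> ((d, w'), (a, w)) \<in> ord"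
  unfolding ord_def lt_def by simp

lemma bel_below: "bel {a} g \<longleftrightarrow> g \<in> below gt a"
  by (simp add: bel_def below_def)

lemma PK_all: "PKs a w"
proof -
  have "PKs (fst p) (snd p)" for p
  proof (induction p rule: wf_induct[OF wf_ord])
    case (1 p)
    obtain a w where p: "p = (a, w)" by (cases p)
    have IH: "PKs a' w'" if "((a', w'), (a, w)) \<in> ord" for a' w'
      using 1 p that by (metis fst_conv snd_conv)
    show ?case
    proof (cases w)
      case Nil
      show ?thesis unfolding p PKs_def Nil fst_conv snd_conv
      proof (intro allI impI)
        fix x y z assume "(y, x) \<in> R1 a" "rpath y [] z"
        then have "z = y" "(x, y) \<in> U1" using U1I by (auto elim: rpath.cases)
        then show "\<exists>w' z'. rpath x w' z' \<and> (z', z) \<in> U1\<^sup>* \<and> leA {a} (lmm w') (lmm [])"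
          by (intro exI[of _ "[]"] exI[of _ x]) (auto intro: rnil leA_refl)
      qed
    next
      case (Cons b w2)
      show ?thesis unfolding p PKs_def Cons snd_conv fst_conv
      proof (intro allI impI)
        fix x y z assume xy: "(y, x) \<in> R1 a" and yz: "rpath y (b # w2) z"
        then obtain y1 where yy1: "(y, y1) \<in> R2 b" and y1z: "rpath y1 w2 z"
          by (auto elim: rpath.cases)
        from peaks[OF xy yy1] obtain x1 x2 x3 x4 where
          p1: "(x, x1) \<in> (conv_K R1 R2 (below gt a))\<^sup>*" and
          p2: "(x1, x2) \<in> (R2 b)\<^sup>=" and
          p3: "(x2, x3) \<in> (conv_K R1 R2 (below2 gt a b))\<^sup>*" and
          p4: "(x3, x4) \<in> ((R1 a)\<inverse>)\<^sup>=" and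
          p5: "(x4, y1) \<in> (conv_K R1 R2 (below gt b))\<^sup>*"
          unfolding decreasing_peak_def by blast
        have orcA: "PKs d w'" if "d \<in> below gt b" "leA {b} (lmm w') (lmm w2)" for d w'
        proof -
          have "leA {b} (lmm (d # w')) (lmm w2)"
            using leA_cons[OF that(2)] that(1) bel_below by simp
          then have "leA {a, b} (lmm (d # w')) (lmm w2)" by (rule leA_mono[rotated]) auto
          then have "lt (lmm (d # w')) (lmm (a # w))" unfolding Cons by (rule leA_A5)
          then show ?thesis by (intro IH lt_ord)
        qed
        obtain w3 z3 where A: "rpath x4 w3 z3" "(z3, z) \<in> U1\<^sup>*" "leA {b} (lmm w3) (lmm w2)"
          using seg[OF p5 _ orcA y1z _ leA_refl] bel_below by blast
        obtain w4 z4 where B: "rpath x3 w4 z4" "(z4, z) \<in> U1\<^sup>*" "leA {a, b} (lmm w4) (lmm w2)"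
        proof (cases "x3 = x4")
          case True
          then show ?thesis using that A leA_mono[OF _ A(3), of "{a,b}"] by auto
        next
          case False
          then have "(x4, x3) \<in> R1 a" using p4 by auto
          have ltw: "lt (lmm w3) (lmm (b # w2))" using A(3) by (rule leA_lt)
          have "le (lmm (a # w3)) (lmm (a # b # w2))"
            using le_add2[OF lt_F[OF ltw], of "{#a#}" "{a}"] by simp
          then have "((a, w3), (a, b # w2)) \<in> ord"
            using ltw unfolding ord_def le_def lt_def by auto
          then have "PKs a w3" using IH Cons by simp
          then obtain w4 z4 where "rpath x3 w4 z4" "(z4, z3) \<in> U1\<^sup>*" "leA {a} (lmm w4) (lmm w3)"
            using \<open>(x4, x3) \<in> R1 a\<close> A(1) unfolding PKs_def by blast
          moreover have "leA {a, b} (lmm w4) (lmm w3)" by (rule leA_mono[OF _ calculation(3)]) auto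
          moreover have "leA {a, b} (lmm w3) (lmm w2)" by (rule leA_mono[OF _ A(3)]) auto
          ultimately show ?thesis using that A(2) leA_trans by (meson rtrancl_trans)
        qed
        have orcC: "PKs d w'" if "d \<in> below2 gt a b" "leA {a, b} (lmm w') (lmm w2)" for d w'
        proof -
          have "bel {a, b} d" using that(1) by (auto simp: below2_def below_def bel_def)
          then have "leA {a, b} (lmm (d # w')) (lmm w2)"
            using leA_cons[OF that(2)] by simp
          then have "lt (lmm (d # w')) (lmm (a # w))" unfolding Cons by (rule leA_A5)
          then show ?thesis by (intro IH lt_ord)
        qed
        obtain w5 z5 where C: "rpath x2 w5 z5" "(z5, z) \<in> U1\<^sup>*" "leA {a, b} (lmm w5) (lmm w2)"
          using seg[OF p3 _ orcC B(1) B(2) B(3)] by (fastforce simp: below2_def below_def bel_def)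
        obtain w6 z6 where D: "rpath x1 w6 z6" "(z6, z) \<in> U1\<^sup>*" "leA {a} (lmm w6) (lmm (b # w2))"
        proof (cases "x1 = x2")
          case True
          then show ?thesis using that C leA_A6 by blast
        next
          case False
          then have "(x1, x2) \<in> R2 b" using p2 by auto
          then have "rpath x1 (b # w5) z5" using C(1) by (rule rcons)
          moreover have "leA {a} (lmm (b # w5)) (lmm (b # w2))" using leA_A7[OF C(3)] by simp
          ultimately show ?thesis using that C(2) by blast
        qed
        have orcD: "PKs d w'" if "d \<in> below gt a" "leA {a} (lmm w') (lmm (b # w2))" for d w'
        proof -
          have "leA {a} (lmm (d # w')) (lmm (b # w2))"
            using leA_cons[OF that(2)] that(1) bel_below by simp
          then have "lt (lmm (d # w')) (lmm (a # w))" unfolding Cons by (rule leA_lt)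
          then show ?thesis by (intro IH lt_ord)
        qed
        obtain w7 z7 where "rpath x w7 z7" "(z7, z) \<in> U1\<^sup>*" "leA {a} (lmm w7) (lmm (b # w2))"
          using seg[OF p1 _ orcD D(1) D(2) D(3)] bel_below by blast
        then show "\<exists>w' z'. rpath x w' z' \<and> (z', z) \<in> U1\<^sup>* \<and> leA {a} (lmm w') (lmm (b # w2))"
          by blast
      qed
    qed
  qed
  then show ?thesis by (metis fst_conv snd_conv)
qed

lemma rpath_U2: "rpath x w z \<Longrightarrow> (x, z) \<in> (union_ars R2)\<^sup>*"
  by (induction rule: rpath.induct) (auto simp: union_ars_def intro: converse_rtrancl_into_rtrancl)

lemma conv_valley: "(x, t) \<in> (U1 \<union> union_ars R2)\<^sup>* \<Longrightarrow> \<exists>w z. rpath x w z \<and> (z, t) \<in> U1\<^sup>*"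
proof (induction rule: converse_rtrancl_induct)
  case base
  then show ?case by (blast intro: rnil)
next
  case (step x x')
  then obtain w z where wz: "rpath x' w z" "(z, t) \<in> U1\<^sup>*" by blast
  from step.hyps(1) consider "(x, x') \<in> U1" | "(x, x') \<in> union_ars R2" by blast
  then show ?case
  proof cases
    case 1
    then obtain a where "(x', x) \<in> R1 a" unfolding U1_def union_ars_def by blast
    then obtain w' z' where "rpath x w' z'" "(z', z) \<in> U1\<^sup>*"
      using PK_all[of a w] wz(1) unfolding PKs_def by blast
    then show ?thesis using wz(2) by (meson rtrancl_trans)
  next
    case 2
    then obtain b where "(x, x') \<in> R2 b" unfolding union_ars_def by blast
    then show ?thesis using wz by (blast intro: rcons)
  qed
qed

theorem dd_commute: "ars_commute R1 R2"
  unfolding ars_commute_def commute_def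
proof
  fix p assume "p \<in> ((union_ars R1)\<inverse>)\<^sup>* O (union_ars R2)\<^sup>*"
  then obtain x y t where p: "p = (x, t)" "(x, y) \<in> U1\<^sup>*" "(y, t) \<in> (union_ars R2)\<^sup>*"
    unfolding U1_def by blast
  have "(x, y) \<in> (U1 \<union> union_ars R2)\<^sup>*" using p(2) by (rule rtrancl_mono[THEN subsetD, rotated]) auto
  moreover have "(y, t) \<in> (U1 \<union> union_ars R2)\<^sup>*" using p(3) by (rule rtrancl_mono[THEN subsetD, rotated]) auto
  ultimately have "(x, t) \<in> (U1 \<union> union_ars R2)\<^sup>*" by (rule rtrancl_trans)
  then obtain w z where "rpath x w z" "(z, t) \<in> U1\<^sup>*" using conv_valley by blast
  then show "p \<in> (union_ars R2)\<^sup>* O ((union_ars R1)\<inverse>)\<^sup>*"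
    using p(1) rpath_U2 unfolding U1_def by blast
qed

end

lemma convI1: "g \<in> K \<Longrightarrow> (y, x) \<in> R1 g \<Longrightarrow> (x, y) \<in> conv_K R1 R2 K"
  unfolding conv_K_def by blast
lemma convI2: "g \<in> K \<Longrightarrow> (x, y) \<in> R2 g \<Longrightarrow> (x, y) \<in> conv_K R1 R2 K"
  unfolding conv_K_def by blast

lemma conv_mono: "(\<And>g. R1 g \<subseteq> R1' g) \<Longrightarrow> (\<And>g. R2 g \<subseteq> R2' g) \<Longrightarrow>
  conv_K R1 R2 K \<subseteq> conv_K R1' R2' K"
  unfolding conv_K_def by blast

lemma dp_mono: "(\<And>g. R1 g \<subseteq> R1' g) \<Longrightarrow> (\<And>g. R2 g \<subseteq> R2' g) \<Longrightarrow>
  decreasing_peak gt R1 R2 a b x y \<Longrightarrow> decreasing_peak gt R1' R2' a b x y"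
proof -
  assume m1: "\<And>g. R1 g \<subseteq> R1' g" and m2: "\<And>g. R2 g \<subseteq> R2' g"
  have cm: "\<And>K. (conv_K R1 R2 K)\<^sup>* \<subseteq> (conv_K R1' R2' K)\<^sup>*"
    by (rule rtrancl_mono[OF conv_mono[OF m1 m2]])
  have s1: "(R2 b)\<^sup>= \<subseteq> (R2' b)\<^sup>=" and s2: "((R1 a)\<inverse>)\<^sup>= \<subseteq> ((R1' a)\<inverse>)\<^sup>=" using m1 m2 by blast+
  show "decreasing_peak gt R1 R2 a b x y \<Longrightarrow> decreasing_peak gt R1' R2' a b x y"
    unfolding decreasing_peak_def
    by (rule subsetD[OF relcomp_mono[OF cm relcomp_mono[OF s1 relcomp_mono[OF cm relcomp_mono[OF s2 cm]]]]])
qed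


lemma dpI:
  assumes "(b, p) \<in> (conv_K R1 R2 (below gt a))\<^sup>*" "(p, q) \<in> (R2 bb)\<^sup>="
    "(q, u) \<in> (conv_K R1 R2 (below2 gt a bb))\<^sup>*" "(u, v) \<in> ((R1 a)\<inverse>)\<^sup>="
    "(v, c) \<in> (conv_K R1 R2 (below gt bb))\<^sup>*"
  shows "decreasing_peak gt R1 R2 a bb b c"
  unfolding decreasing_peak_def
  by (rule relcompI[OF assms(1) relcompI[OF assms(2) relcompI[OF assms(3) relcompI[OF assms(4) assms(5)]]]])

lemma dpE:
  assumes "decreasing_peak gt R1 R2 a bb b c"
  obtains p q u v where "(b, p) \<in> (conv_K R1 R2 (below gt a))\<^sup>*" "(p, q) \<in> (R2 bb)\<^sup>="
    "(q, u) \<in> (conv_K R1 R2 (below2 gt a bb))\<^sup>*" "(u, v) \<in> ((R1 a)\<inverse>)\<^sup>="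
    "(v, c) \<in> (conv_K R1 R2 (below gt bb))\<^sup>*"
  using assms unfolding decreasing_peak_def by (elim relcompEpair) (rule that)

theorem theorem6:
  fixes R1 R2 :: "'i \<Rightarrow> ('a \<times> 'a) set"
    and gt :: "('i \<times> 'i) set"
    and bot :: 'i
  assumes order: "irrefl gt" "trans gt"
    and wf: "wf (gt\<inverse>)"
    and least: "\<And>\<alpha>. \<alpha> \<noteq> bot \<Longrightarrow> (\<alpha>, bot) \<in> gt"
    and bot_commute: "commute (R1 bot) (R2 bot)"
    and peaks: "\<And>\<alpha> \<beta> a b c. (\<alpha>, \<beta>) \<noteq> (bot, bot) \<Longrightarrow>
                  (a, b) \<in> R1 \<alpha> \<Longrightarrow> (a, c) \<in> R2 \<beta> \<Longrightarrow> decreasing_peak gt R1 R2 \<alpha> \<beta> b c"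
  shows "ars_commute R1 R2"
proof -
  define R1' where "R1' g = (if g = bot then (R1 bot)\<^sup>* else R1 g)" for g
  define R2' where "R2' g = (if g = bot then (R2 bot)\<^sup>* else R2 g)" for g
  have m1: "R1 g \<subseteq> R1' g" for g unfolding R1'_def by auto
  have m2: "R2 g \<subseteq> R2' g" for g unfolding R2'_def by auto
  have bb: "below gt bot = {}"
  proof -
    have "(bot, g) \<notin> gt" for g
    proof
      assume h: "(bot, g) \<in> gt"
      show False
      proof (cases "g = bot")
        case True then show False using h order(1) by (simp add: irrefl_def)
      next
        case False
        then have "(g, bot) \<in> gt" by (rule least)
        then have "(bot, bot) \<in> gt" using h order(2) by (meson transD)
        then show False using order(1) by (simp add: irrefl_def)
      qed
    qed
    then show ?thesis by (auto simp: below_def)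
  qed
  have cbot: "conv_K R1 R2 (below gt bot) = {}" "conv_K R1' R2' (below gt bot) = {}"
    using bb by (auto simp: conv_K_def)
  have b2a: "below2 gt a bot = below gt a" "below2 gt bot a = below gt a" for a
    using bb by (auto simp: below2_def)
  have botb: "a \<noteq> bot \<Longrightarrow> bot \<in> below gt a" for a using least by (simp add: below_def)
  have peaks': "decreasing_peak gt R1' R2' \<alpha> \<beta> b c"
    if ab: "(a, b) \<in> R1' \<alpha>" and ac: "(a, c) \<in> R2' \<beta>" for \<alpha> \<beta> a b c
  proof (cases "\<alpha> = bot")
    case True note \<alpha> = True
    show ?thesis
    proof (cases "\<beta> = bot")
      case True
      have "(b, c) \<in> ((R1 bot)\<inverse>)\<^sup>* O (R2 bot)\<^sup>*"
        using ab ac \<alpha> True by (auto simp: R1'_def R2'_def rtrancl_converse)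
      then have "(b, c) \<in> (R2 bot)\<^sup>* O ((R1 bot)\<inverse>)\<^sup>*"
        using bot_commute unfolding commute_def by blast
      then obtain d where "(b, d) \<in> R2' bot" "(d, c) \<in> (R1' bot)\<inverse>"
        by (auto simp: R1'_def R2'_def rtrancl_converse)
      then show ?thesis unfolding \<alpha> True by (intro dpI[where p=b and q=d and u=d and v=c]) auto
    next
      case False
      note \<beta> = False
      have ab0: "(a, b) \<in> (R1 bot)\<^sup>*" using ab \<alpha> by (simp add: R1'_def)
      have ac0: "(a, c) \<in> R2 \<beta>" using ac \<beta> by (simp add: R2'_def)
      have c1: "(conv_K R1 R2 (below gt \<beta>))\<^sup>* \<subseteq> (conv_K R1' R2' (below gt \<beta>))\<^sup>*"
        by (rule rtrancl_mono[OF conv_mono[OF m1 m2]])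
      have "\<exists>e. (b, e) \<in> (R2 \<beta>)\<^sup>= \<and> (e, c) \<in> (conv_K R1' R2' (below gt \<beta>))\<^sup>*"
        using ab0
      proof (induction rule: rtrancl_induct)
        case base
        have "(a, c) \<in> (R2 \<beta>)\<^sup>=" using ac0 by simp
        then show ?case by (intro exI[of _ c] conjI rtrancl_refl)
      next
        case (step b1 b)
        then obtain e1 where e1: "(b1, e1) \<in> (R2 \<beta>)\<^sup>=" "(e1, c) \<in> (conv_K R1' R2' (below gt \<beta>))\<^sup>*"
          by blast
        have "(b1, b) \<in> R1' bot" using m1 step(2) by blast
        then have bb1: "(b, b1) \<in> conv_K R1' R2' (below gt \<beta>)"
          by (rule convI1[OF botb[OF \<beta>]])
        show ?case
        proof (cases "b1 = e1")
          case True
          have "(b, c) \<in> (conv_K R1' R2' (below gt \<beta>))\<^sup>*"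
            using converse_rtrancl_into_rtrancl[OF bb1 e1(2)[folded True]] .
          then show ?thesis by (intro exI[of _ b] conjI) simp_all
        next
          case False
          then have "(b1, e1) \<in> R2 \<beta>" using e1 by auto
          have "(bot, \<beta>) \<noteq> (bot, bot)" using \<beta> by simp
          from peaks[OF this step(2) \<open>(b1, e1) \<in> R2 \<beta>\<close>]
          have "decreasing_peak gt R1 R2 bot \<beta> b e1" .
          then obtain f g h where f: "(b, f) \<in> (R2 \<beta>)\<^sup>="
            and g: "(f, g) \<in> (conv_K R1 R2 (below gt \<beta>))\<^sup>*"
            and h: "(g, h) \<in> ((R1 bot)\<inverse>)\<^sup>="
            and h2: "(h, e1) \<in> (conv_K R1 R2 (below gt \<beta>))\<^sup>*"
            by (rule dpE) (auto simp: cbot b2a)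
          have gh: "(g, h) \<in> (conv_K R1' R2' (below gt \<beta>))\<^sup>*"
          proof (cases "g = h")
            case False
            then have "(h, g) \<in> R1' bot" using h m1 by auto
            then show ?thesis by (intro r_into_rtrancl convI1[OF botb[OF \<beta>]])
          qed simp
          have "(f, g) \<in> (conv_K R1' R2' (below gt \<beta>))\<^sup>*" using g c1 by blast
          moreover have "(h, e1) \<in> (conv_K R1' R2' (below gt \<beta>))\<^sup>*" using h2 c1 by blast
          ultimately have "(f, c) \<in> (conv_K R1' R2' (below gt \<beta>))\<^sup>*"
            using gh e1(2) by (meson rtrancl_trans)
          then show ?thesis using f by blast
        qed
      qed
      then obtain e where e: "(b, e) \<in> (R2 \<beta>)\<^sup>=" "(e, c) \<in> (conv_K R1' R2' (below gt \<beta>))\<^sup>*"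
        by blast
      have e1': "(b, e) \<in> (R2' \<beta>)\<^sup>=" using e(1) m2[of \<beta>] by auto
      have e2': "(e, c) \<in> (conv_K R1' R2' (below2 gt \<alpha> \<beta>))\<^sup>*" using e(2) b2a \<alpha> by simp
      show ?thesis by (rule dpI[where p=b and q=e and u=c and v=c, OF _ e1' e2']) simp_all
    qed
  next
    case False note \<alpha> = False
    show ?thesis
    proof (cases "\<beta> = bot")
      case True
      have ab0: "(a, b) \<in> R1 \<alpha>" and ac0: "(a, c) \<in> (R2 bot)\<^sup>*"
        using ab ac \<alpha> True by (auto simp: R1'_def R2'_def)
      have "\<exists>e. (b, e) \<in> (conv_K R1' R2' (below gt \<alpha>))\<^sup>* \<and> (e, c) \<in> ((R1 \<alpha>)\<inverse>)\<^sup>="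
        using ac0
      proof (induction rule: rtrancl_induct)
        case base
        have "(b, a) \<in> ((R1 \<alpha>)\<inverse>)\<^sup>=" using ab0 by simp
        then show ?case by (intro exI[of _ b] conjI rtrancl_refl)
      next
        case (step c1 c2)
        then obtain e1 where e1: "(b, e1) \<in> (conv_K R1' R2' (below gt \<alpha>))\<^sup>*" "(e1, c1) \<in> ((R1 \<alpha>)\<inverse>)\<^sup>="
          by blast
        have "(c1, c2) \<in> R2' bot" using m2 step(2) by blast
        then have cc: "(c1, c2) \<in> conv_K R1' R2' (below gt \<alpha>)"
          by (rule convI2[OF botb[OF \<alpha>]])
        have c1: "(conv_K R1 R2 (below gt \<alpha>))\<^sup>* \<subseteq> (conv_K R1' R2' (below gt \<alpha>))\<^sup>*"
          by (rule rtrancl_mono[OF conv_mono[OF m1 m2]])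
        show ?case
        proof (cases "e1 = c1")
          case True
          have "(b, c2) \<in> (conv_K R1' R2' (below gt \<alpha>))\<^sup>*"
            using rtrancl_into_rtrancl[OF e1(1) cc[folded True]] .
          then show ?thesis by (intro exI[of _ c2] conjI) simp_all
        next
          case False
          then have "(c1, e1) \<in> R1 \<alpha>" using e1 by auto
          have "(\<alpha>, bot) \<noteq> (bot, bot)" using \<alpha> by simp
          from peaks[OF this \<open>(c1, e1) \<in> R1 \<alpha>\<close> step(2)]
          have "decreasing_peak gt R1 R2 \<alpha> bot e1 c2" .
          then obtain f g h where f: "(e1, f) \<in> (conv_K R1 R2 (below gt \<alpha>))\<^sup>*"
            and g: "(f, g) \<in> (R2 bot)\<^sup>="
            and h: "(g, h) \<in> (conv_K R1 R2 (below gt \<alpha>))\<^sup>*"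
            and h2: "(h, c2) \<in> ((R1 \<alpha>)\<inverse>)\<^sup>="
            by (rule dpE) (auto simp: cbot b2a)
          have fg: "(f, g) \<in> (conv_K R1' R2' (below gt \<alpha>))\<^sup>*"
          proof (cases "f = g")
            case False
            then have "(f, g) \<in> R2' bot" using g m2 by auto
            then show ?thesis by (intro r_into_rtrancl convI2[OF botb[OF \<alpha>]])
          qed simp
          have "(e1, f) \<in> (conv_K R1' R2' (below gt \<alpha>))\<^sup>*" using f c1 by blast
          moreover have "(g, h) \<in> (conv_K R1' R2' (below gt \<alpha>))\<^sup>*" using h c1 by blast
          ultimately have "(b, h) \<in> (conv_K R1' R2' (below gt \<alpha>))\<^sup>*"
            using e1(1) fg by (meson rtrancl_trans)
          then show ?thesis using h2 by blast
        qed
      qed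
      then obtain e where e: "(b, e) \<in> (conv_K R1' R2' (below gt \<alpha>))\<^sup>*" "(e, c) \<in> ((R1 \<alpha>)\<inverse>)\<^sup>="
        by blast
      have "(e, c) \<in> ((R1' \<alpha>)\<inverse>)\<^sup>=" using e(2) m1[of \<alpha>] by auto
      then show ?thesis by (intro dpI[where p=e and q=e and u=e and v=c] e(1)) simp_all
    next
      case False
      have ab1: "(a, b) \<in> R1 \<alpha>" using ab \<alpha> by (simp add: R1'_def)
      have ac1: "(a, c) \<in> R2 \<beta>" using ac False by (simp add: R2'_def)
      have "(\<alpha>, \<beta>) \<noteq> (bot, bot)" using \<alpha> by simp
      from peaks[OF this ab1 ac1] have "decreasing_peak gt R1 R2 \<alpha> \<beta> b c" .
      then show ?thesis by (rule dp_mono[OF m1 m2])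
    qed
  qed
  interpret D: dd gt R1' R2'
    by unfold_locales (fact order wf peaks')+
  have u1: "union_ars R1 \<subseteq> union_ars R1'" "union_ars R1' \<subseteq> (union_ars R1)\<^sup>*"
  proof -
    show "union_ars R1 \<subseteq> union_ars R1'" unfolding union_ars_def using m1 by blast
    have "R1' g \<subseteq> (union_ars R1)\<^sup>*" for g
    proof (cases "g = bot")
      case True
      have "R1 bot \<subseteq> union_ars R1" unfolding union_ars_def by blast
      then show ?thesis using True unfolding R1'_def by (simp add: rtrancl_mono)
    next
      case False
      then show ?thesis unfolding R1'_def union_ars_def by auto
    qed
    then show "union_ars R1' \<subseteq> (union_ars R1)\<^sup>*" unfolding union_ars_def[of "R1'"] by blast
  qed
  have u2: "union_ars R2 \<subseteq> union_ars R2'" "union_ars R2' \<subseteq> (union_ars R2)\<^sup>*"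
  proof -
    show "union_ars R2 \<subseteq> union_ars R2'" unfolding union_ars_def using m2 by blast
    have "R2' g \<subseteq> (union_ars R2)\<^sup>*" for g
    proof (cases "g = bot")
      case True
      have "R2 bot \<subseteq> union_ars R2" unfolding union_ars_def by blast
      then show ?thesis using True unfolding R2'_def by (simp add: rtrancl_mono)
    next
      case False
      then show ?thesis unfolding R2'_def union_ars_def by auto
    qed
    then show "union_ars R2' \<subseteq> (union_ars R2)\<^sup>*" unfolding union_ars_def[of "R2'"] by blast
  qed
  have e1: "(union_ars R1')\<^sup>* = (union_ars R1)\<^sup>*" using rtrancl_subset[OF u1] by simp
  have e2: "(union_ars R2')\<^sup>* = (union_ars R2)\<^sup>*" using rtrancl_subset[OF u2] by simp
  show ?thesis using D.dd_commute unfolding ars_commute_def commute_def rtrancl_converse e1 e2 .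
qed

end
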